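(* Let $\mathcal{H}$ be a finite-dimensional complex Hilbert space and let $\Phi: B(\mathcal{H})\to B(\mathcal{H})$ be a Hermitian-preserving trace-preserving linear map which is invertible. Then $\Phi$ is semi-positive if and only if $\Phi^{-1}$ is semi-positive. In particular, if $\Phi$ is CPTP (or positive and trace-preserving) and invertible, then $\Phi^{-1}$ is semi-positive and trace-preserving.
   Context: $B(\mathcal{H})$ denotes all linear operators on $\mathcal{H}$; a density matrix is a positive semidefinite operator of trace one. A map is Hermitian-preserving if $\Phi(X^\dagger)=\Phi(X)^\dagger$ and trace-preserving if $\operatorname{Tr}\Phi(X)=\operatorname{Tr}X$. A Hermitian-preserving map $\Phi$ is semi-positive if there exists an invertible density matrix $\rho$ such that $\Phi(\rho)$ is an invertible density matrix. *)

theory Defs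
  imports "HOL-Analysis.Analysis"
begin

text \<open>B(H) for H = C^n (n = CARD('n)) is modelled as complex^'n^'n.\<close>

type_synonym 'n cmat = "complex^'n^'n"

definition adjoint_mat :: "'n::finite cmat \<Rightarrow> 'n cmat" where
  "adjoint_mat X = (\<chi> i j. cnj (X $ j $ i))"

definition cscale_mat :: "complex \<Rightarrow> 'n::finite cmat \<Rightarrow> 'n cmat" where
  "cscale_mat c X = (\<chi> i j. c * X $ i $ j)"

definition clinear_map :: "('n::finite cmat \<Rightarrow> 'n cmat) \<Rightarrow> bool" where
  "clinear_map \<Phi> \<longleftrightarrow> (\<forall>X Y. \<Phi> (X + Y) = \<Phi> X + \<Phi> Y) \<and>
                     (\<forall>c X. \<Phi> (cscale_mat c X) = cscale_mat c (\<Phi> X))"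

definition psd :: "'n::finite cmat \<Rightarrow> bool" where
  "psd A \<longleftrightarrow> (\<forall>v::complex^'n.
      let q = (\<Sum>i\<in>UNIV. \<Sum>j\<in>UNIV. cnj (v $ i) * A $ i $ j * v $ j)
      in Im q = 0 \<and> Re q \<ge> 0)"

definition density_matrix :: "'n::finite cmat \<Rightarrow> bool" where
  "density_matrix \<rho> \<longleftrightarrow> psd \<rho> \<and> trace \<rho> = 1"

definition hermitian_preserving :: "('n::finite cmat \<Rightarrow> 'n cmat) \<Rightarrow> bool" where
  "hermitian_preserving \<Phi> \<longleftrightarrow> (\<forall>X. \<Phi> (adjoint_mat X) = adjoint_mat (\<Phi> X))"

definition trace_preserving :: "('n::finite cmat \<Rightarrow> 'n cmat) \<Rightarrow> bool" where
  "trace_preserving \<Phi> \<longleftrightarrow> (\<forall>X. trace (\<Phi> X) = trace X)"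

definition positive_map :: "('n::finite cmat \<Rightarrow> 'n cmat) \<Rightarrow> bool" where
  "positive_map \<Phi> \<longleftrightarrow> (\<forall>X. psd X \<longrightarrow> psd (\<Phi> X))"

text \<open>As in the paper, semi-positivity is a notion for Hermitian-preserving maps.\<close>
definition semi_positive :: "('n::finite cmat \<Rightarrow> 'n cmat) \<Rightarrow> bool" where
  "semi_positive \<Phi> \<longleftrightarrow> hermitian_preserving \<Phi> \<and>
     (\<exists>\<rho>. density_matrix \<rho> \<and> invertible \<rho> \<and>
          density_matrix (\<Phi> \<rho>) \<and> invertible (\<Phi> \<rho>))"

end

theory Submission
  imports Defs
begin

definition qf :: "'n::finite cmat \<Rightarrow> complex^'n \<Rightarrow> complex" where
  "qf A v = (\<Sum>i\<in>UNIV. \<Sum>j\<in>UNIV. cnj (v $ i) * A $ i $ j * v $ j)"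

lemma psd_qf: "psd A \<longleftrightarrow> (\<forall>v. Im (qf A v) = 0 \<and> Re (qf A v) \<ge> 0)"
  unfolding psd_def qf_def Let_def by simp

lemma qf_add: "qf (X + Y) v = qf X v + qf Y v"
  unfolding qf_def by (simp add: distrib_left distrib_right sum.distrib)

lemma qf_scale: "qf (cscale_mat c X) v = c * qf X v"
  unfolding qf_def cscale_mat_def by (simp add: sum_distrib_left mult.commute mult.left_commute)

lemma qf_ker: "A *v v = 0 \<Longrightarrow> qf A v = 0"
proof -
  assume a: "A *v v = 0"
  have "qf A v = (\<Sum>i\<in>UNIV. cnj (v $ i) * (A *v v) $ i)"
    unfolding qf_def matrix_vector_mult_def
    by (simp add: sum_distrib_left mult.assoc)
  also have "\<dots> = 0" using a by simp
  finally show ?thesis .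
qed

lemma qf_outer:
  fixes v :: "complex^'n::finite"
  shows "qf (\<chi> i j. v $ i * cnj (v $ j)) v = complex_of_real ((\<Sum>i\<in>UNIV. (cmod (v $ i))^2)^2)"
proof -
  have "qf (\<chi> i j. v $ i * cnj (v $ j)) v =
     (\<Sum>i\<in>UNIV. \<Sum>j\<in>UNIV. (cnj (v $ i) * v $ i) * (cnj (v $ j) * v $ j))"
    unfolding qf_def by (simp add: mult.commute mult.left_commute)
  also have "\<dots> = (\<Sum>i\<in>UNIV. cnj (v $ i) * v $ i) * (\<Sum>j\<in>UNIV. cnj (v $ j) * v $ j)"
    by (simp add: sum_product)
  also have "(\<Sum>i\<in>UNIV. cnj (v $ i) * v $ i) = complex_of_real (\<Sum>i\<in>UNIV. (cmod (v $ i))^2)"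
    unfolding of_real_sum using complex_norm_square by (intro sum.cong) (auto simp: mult.commute)
  finally show ?thesis by (simp add: power2_eq_square)
qed

lemma lin_add: "clinear_map \<Phi> \<Longrightarrow> \<Phi> (X + Y) = \<Phi> X + \<Phi> Y"
  unfolding clinear_map_def by blast

lemma lin_scale: "clinear_map \<Phi> \<Longrightarrow> \<Phi> (cscale_mat c X) = cscale_mat c (\<Phi> X)"
  unfolding clinear_map_def by blast

lemma inv_hp:
  assumes "hermitian_preserving \<Phi>" "bij \<Phi>"
  shows "hermitian_preserving (inv \<Phi>)"
  unfolding hermitian_preserving_def
proof
  fix X
  have "\<Phi> (adjoint_mat (inv \<Phi> X)) = adjoint_mat X"
    using assms unfolding hermitian_preserving_def by (simp add: bij_is_surj surj_f_inv_f)
  then show "inv \<Phi> (adjoint_mat X) = adjoint_mat (inv \<Phi> X)"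
    using assms(2) by (metis bij_inv_eq_iff)
qed

lemma key:
  fixes \<Phi> :: "'n::finite cmat \<Rightarrow> 'n cmat"
  assumes lin: "clinear_map \<Phi>" and hp: "hermitian_preserving \<Phi>" and b: "bij \<Phi>"
    and pos: "positive_map \<Phi>"
    and cover: "\<And>H. adjoint_mat H = H \<Longrightarrow> \<exists>c. psd (cscale_mat c P + cscale_mat (-1) H)"
  shows "invertible (\<Phi> P)"
proof (rule ccontr)
  assume "\<not> invertible (\<Phi> P)"
  then obtain v where v0: "v \<noteq> 0" and kv: "\<Phi> P *v v = 0"
    unfolding invertible_left_inverse matrix_left_invertible_ker by blast
  define K :: "'n cmat" where "K = (\<chi> i j. v $ i * cnj (v $ j))"
  define H where "H = inv \<Phi> K"
  have "adjoint_mat K = K" unfolding K_def adjoint_mat_def by (simp add: vec_eq_iff)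
  then have "adjoint_mat H = H" unfolding H_def
    using inv_hp[OF hp b] unfolding hermitian_preserving_def by metis
  then obtain c where c: "psd (cscale_mat c P + cscale_mat (-1) H)" using cover by blast
  have "\<Phi> (cscale_mat c P + cscale_mat (-1) H) = cscale_mat c (\<Phi> P) + cscale_mat (-1) K"
    using lin b by (simp add: lin_add lin_scale H_def bij_is_surj surj_f_inv_f)
  then have "psd (cscale_mat c (\<Phi> P) + cscale_mat (-1) K)"
    using pos c unfolding positive_map_def by metis
  then have r: "Re (qf (cscale_mat c (\<Phi> P) + cscale_mat (-1) K) v) \<ge> 0"
    unfolding psd_qf by blast
  define S where "S = (\<Sum>i\<in>UNIV. (cmod (v $ i))^2)"
  have "qf (cscale_mat c (\<Phi> P) + cscale_mat (-1) K) v = - complex_of_real (S^2)"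
    by (simp add: qf_add qf_scale qf_ker[OF kv] K_def qf_outer S_def)
  with r have "S^2 \<le> 0" by simp
  moreover obtain i where "v $ i \<noteq> 0" using v0 by (metis vec_eq_iff zero_index)
  then have "S > 0" unfolding S_def
    by (intro sum_pos2[of UNIV i]) auto
  ultimately show False by (metis mult_pos_pos not_less power2_eq_square)
qed

lemma qf_id: "qf (mat 1 :: 'n::finite cmat) v = complex_of_real (\<Sum>i\<in>UNIV. (cmod (v $ i))^2)"
proof -
  have "qf (mat 1 :: 'n::finite cmat) v = (\<Sum>i\<in>UNIV. cnj (v $ i) * v $ i)"
    unfolding qf_def mat_def by (simp add: if_distrib if_distribR cong: if_cong)
  also have "\<dots> = complex_of_real (\<Sum>i\<in>UNIV. (cmod (v $ i))^2)"
    unfolding of_real_sum using complex_norm_square by (intro sum.cong) (auto simp: mult.commute)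
  finally show ?thesis .
qed

lemma herm_entry: "adjoint_mat H = H \<Longrightarrow> H $ i $ j = cnj (H $ j $ i)"
  unfolding adjoint_mat_def by (metis vec_lambda_beta)

lemma qf_herm_real:
  assumes "adjoint_mat H = H"
  shows "cnj (qf H v) = qf H v"
proof -
  have "cnj (qf H v) = (\<Sum>i\<in>UNIV. \<Sum>j\<in>UNIV. cnj (v $ j) * H $ j $ i * v $ i)"
  proof -
    have e: "cnj (H $ i $ j) = H $ j $ i" for i j using herm_entry[OF assms, of j i] by simp
    show ?thesis unfolding qf_def by (simp add: e mult.commute mult.left_commute)
  qed
  also have "\<dots> = qf H v" unfolding qf_def by (rule sum.swap)
  finally show ?thesis .
qed

lemma prod_le_S:
  fixes v :: "complex^'n::finite"
  shows "cmod (v $ i) * cmod (v $ j) \<le> (\<Sum>k\<in>UNIV. (cmod (v $ k))^2)"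
proof -
  let ?S = "\<Sum>k\<in>UNIV. (cmod (v $ k))^2"
  have a: "(cmod (v $ i))^2 \<le> ?S" by (rule member_le_sum) auto
  have b: "(cmod (v $ j))^2 \<le> ?S" by (rule member_le_sum) auto
  have "0 \<le> (cmod (v $ i) - cmod (v $ j))^2" by simp
  then have "2 * (cmod (v $ i) * cmod (v $ j)) \<le> (cmod (v $ i))^2 + (cmod (v $ j))^2"
    by (simp add: power2_diff)
  with a b show ?thesis by linarith
qed

lemma qf_bound:
  fixes H :: "'n::finite cmat"
  shows "cmod (qf H v) \<le> (\<Sum>i\<in>UNIV. \<Sum>j\<in>UNIV. cmod (H $ i $ j)) * (\<Sum>k\<in>UNIV. (cmod (v $ k))^2)"
proof -
  let ?S = "\<Sum>k\<in>UNIV. (cmod (v $ k))^2"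
  have "cmod (qf H v) \<le> (\<Sum>i\<in>UNIV. cmod (\<Sum>j\<in>UNIV. cnj (v $ i) * H $ i $ j * v $ j))"
    unfolding qf_def by (rule norm_sum)
  also have "\<dots> \<le> (\<Sum>i\<in>UNIV. \<Sum>j\<in>UNIV. cmod (cnj (v $ i) * H $ i $ j * v $ j))"
    by (intro sum_mono norm_sum)
  also have "\<dots> \<le> (\<Sum>i\<in>UNIV. \<Sum>j\<in>UNIV. cmod (H $ i $ j) * ?S)"
  proof (intro sum_mono)
    fix i j
    have "cmod (cnj (v $ i) * H $ i $ j * v $ j) = cmod (H $ i $ j) * (cmod (v $ i) * cmod (v $ j))"
      by (simp add: norm_mult)
    also have "\<dots> \<le> cmod (H $ i $ j) * ?S"
      by (intro mult_left_mono prod_le_S) auto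
    finally show "cmod (cnj (v $ i) * H $ i $ j * v $ j) \<le> cmod (H $ i $ j) * ?S" .
  qed
  also have "\<dots> = (\<Sum>i\<in>UNIV. \<Sum>j\<in>UNIV. cmod (H $ i $ j)) * ?S"
    by (simp add: sum_distrib_right)
  finally show ?thesis .
qed

definition rho0 :: "'n::finite cmat" where
  "rho0 = cscale_mat (1 / of_nat CARD('n)) (mat 1)"

lemma rho0_density: "density_matrix (rho0 :: 'n::finite cmat)"
proof -
  have "psd (rho0 :: 'n cmat)"
    unfolding psd_qf rho0_def qf_scale qf_id
    by (simp add: sum_nonneg)
  moreover have "trace (rho0 :: 'n cmat) = 1"
    unfolding rho0_def trace_def cscale_mat_def mat_def by simp
  ultimately show ?thesis unfolding density_matrix_def by simp
qed

lemma rho0_inv: "invertible (rho0 :: 'n::finite cmat)"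
  unfolding invertible_left_inverse matrix_left_invertible_ker
proof (intro allI impI)
  fix x :: "complex^'n"
  assume a: "rho0 *v x = 0"
  have "rho0 *v x = (\<chi> i. (1 / of_nat CARD('n)) * x $ i)"
    unfolding rho0_def cscale_mat_def mat_def matrix_vector_mult_def
    by (simp add: vec_eq_iff if_distrib if_distribR cong: if_cong)
  with a show "x = 0" by (simp add: vec_eq_iff)
qed

lemma rho0_cover:
  assumes "adjoint_mat H = H"
  shows "\<exists>c. psd (cscale_mat c (rho0 :: 'n::finite cmat) + cscale_mat (-1) H)"
proof -
  define M where "M = (\<Sum>i\<in>UNIV. \<Sum>j\<in>UNIV. cmod (H $ i $ j))"
  have N: "(of_nat CARD('n) :: complex) \<noteq> 0" by simp
  have "psd (cscale_mat (of_nat CARD('n) * complex_of_real M) (rho0 :: 'n cmat) + cscale_mat (-1) H)"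
    unfolding psd_qf
  proof
    fix v :: "complex^'n"
    define S where "S = (\<Sum>k\<in>UNIV. (cmod (v $ k))^2)"
    have q: "qf (cscale_mat (of_nat CARD('n) * complex_of_real M) (rho0 :: 'n cmat) + cscale_mat (-1) H) v
        = complex_of_real (M * S) - qf H v"
      unfolding qf_add qf_scale rho0_def qf_id S_def using N by simp
    have "Im (cnj (qf H v)) = Im (qf H v)" using qf_herm_real[OF assms, of v] by simp
    then have "Im (qf H v) = 0" by simp
    moreover have "Re (qf H v) \<le> M * S"
      using qf_bound[of H v] complex_Re_le_cmod[of "qf H v"] unfolding M_def S_def by linarith
    ultimately show "Im (qf (cscale_mat (of_nat CARD('n) * complex_of_real M) rho0 + cscale_mat (- 1) H) v) = 0 \<and>
          0 \<le> Re (qf (cscale_mat (of_nat CARD('n) * complex_of_real M) rho0 + cscale_mat (- 1) H) v)"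
      unfolding q by simp
  qed
  then show ?thesis by blast
qed

lemma sp_forward:
  fixes \<Phi> :: "'n::finite cmat \<Rightarrow> 'n cmat"
  assumes "hermitian_preserving \<Phi>" "bij \<Phi>" "semi_positive \<Phi>"
  shows "semi_positive (inv \<Phi>)"
proof -
  obtain \<rho> where r: "density_matrix \<rho>" "invertible \<rho>" "density_matrix (\<Phi> \<rho>)" "invertible (\<Phi> \<rho>)"
    using assms(3) unfolding semi_positive_def by blast
  have "inv \<Phi> (\<Phi> \<rho>) = \<rho>" using assms(2) by (simp add: bij_is_inj)
  then show ?thesis unfolding semi_positive_def using inv_hp[OF assms(1,2)] r by metis
qed

lemma sp_backward:
  fixes \<Phi> :: "'n::finite cmat \<Rightarrow> 'n cmat"
  assumes "hermitian_preserving \<Phi>" "bij \<Phi>" "semi_positive (inv \<Phi>)"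
  shows "semi_positive \<Phi>"
proof -
  obtain \<rho> where r: "density_matrix \<rho>" "invertible \<rho>" "density_matrix (inv \<Phi> \<rho>)" "invertible (inv \<Phi> \<rho>)"
    using assms(3) unfolding semi_positive_def by blast
  have "\<Phi> (inv \<Phi> \<rho>) = \<rho>" using assms(2) by (simp add: bij_is_surj surj_f_inv_f)
  then show ?thesis unfolding semi_positive_def using assms(1) r by metis
qed

theorem corollary1:
  fixes \<Phi> :: "'n::finite cmat \<Rightarrow> 'n cmat"
  assumes "clinear_map \<Phi>" and "hermitian_preserving \<Phi>" and "trace_preserving \<Phi>"
    and "bij \<Phi>"
  shows "(semi_positive \<Phi> \<longleftrightarrow> semi_positive (inv \<Phi>)) \<and>
         (positive_map \<Phi> \<longrightarrow> semi_positive (inv \<Phi>) \<and> trace_preserving (inv \<Phi>))"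
proof (intro conjI impI)
  show "semi_positive \<Phi> \<longleftrightarrow> semi_positive (inv \<Phi>)"
    using sp_forward sp_backward assms(2,4) by blast
  have tp: "trace_preserving (inv \<Phi>)"
    unfolding trace_preserving_def
  proof
    fix X
    have "trace (\<Phi> (inv \<Phi> X)) = trace (inv \<Phi> X)" using assms(3) unfolding trace_preserving_def by blast
    then show "trace (inv \<Phi> X) = trace X" using assms(4) by (simp add: bij_is_surj surj_f_inv_f)
  qed
  then show "trace_preserving (inv \<Phi>)" .
  assume pos: "positive_map \<Phi>"
  have "invertible (\<Phi> rho0)"
    by (rule key[OF assms(1,2,4) pos rho0_cover])
  moreover have "density_matrix (\<Phi> rho0)"
    using rho0_density pos assms(3) unfolding density_matrix_def positive_map_def trace_preserving_def
    by metis
  ultimately have "semi_positive \<Phi>"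
    unfolding semi_positive_def using assms(2) rho0_density rho0_inv by blast
  then show "semi_positive (inv \<Phi>)" using sp_forward assms(2,4) by blast
qed

end
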